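(* Let $\mathbf{U}^{(j)}\in\mathbb{C}^{n_j\times n_j}$ be unitary for $j\in[d]$, let $\mathcal{S}\subset[n_1]\times\cdots\times[n_d]$ be a set of $r$ indices, and let $$\mathcal{L}_{\rm Tucker}:=\{\mathcal{C}\times_1\mathbf{U}^{(1)}\cdots\times_d\mathbf{U}^{(d)}:\mathcal{C}\in\mathbb{C}^{n_1\times\cdots\times n_d},\ \mathcal{C}_{\mathbf{i}}=0\text{ for all }\mathbf{i}\notin\mathcal{S}\}.$$ Every $\mathcal{Y}\in\mathcal{L}_{\rm Tucker}$ is written in standard form $\mathcal{Y}=\sum_{\mathbf{i}=(i_1,\dots,i_d)\in\mathcal{S}}\mathcal{C}_{\mathbf{i}}\bigcirc_{\ell=1}^d\mathbf{U}^{(\ell)}_{i_\ell}$ over the basis $\mathcal{B}=\{\bigcirc_{\ell=1}^d\mathbf{U}^{(\ell)}_{i_\ell}:\mathbf{i}\in\mathcal{S}\}$, where $\mathbf{U}^{(\ell)}_{i}$ is the $i$-th column of $\mathbf{U}^{(\ell)}$. Let $\epsilon\in(0,3/4]$ and for each $j\in[d]$ let $\mathbf{A}_j\in\mathbb{C}^{m_j\times n_j}$ be an $(\epsilon/4d)$-JL embedding into $\mathbb{C}^{m_j}$ of the set of $2r^2-r$ vectors $\bigcup_{k\ne h}\{\mathbf{y}^{(j)}_k\pm\mathbf{y}^{(j)}_h,\mathbf{y}^{(j)}_k\pm\mathrm{i}\,\mathbf{y}^{(j)}_h\}\cup\{\mathbf{y}^{(j)}_k\}_k$, where $\{\mathbf{y}^{(j)}_k\}_{k\in[r]}$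 are the mode-$j$ factor vectors $\mathbf{U}^{(j)}_{i_j}$ of the $r$ basis tensors. Then for every $\mathcal{Y}\in\mathcal{L}_{\rm Tucker}$, $$\big|\|\mathcal{Y}\|^2-\|\mathcal{Y}\times_1\mathbf{A}_1\cdots\times_d\mathbf{A}_d\|^2\big|\le\epsilon'\|\mathcal{Y}\|^2,$$ where $$\epsilon':=\begin{cases}\big(\epsilon+e\sqrt{r(r-1)}\,\epsilon^d\big)e&\text{if }\mu_{\mathcal{B}}=0,\\ \epsilon\big(e+e^2\sqrt{r(r-1)}\max(\epsilon^{d-1},\mu_{\mathcal{B}}^{d-1})\big)&\text{otherwise.}\end{cases}$$
   Context: Tensors carry the inner product $\langle\mathcal{X},\mathcal{Y}\rangle=\sum\mathcal{X}_{i_1\dots i_d}\overline{\mathcal{Y}_{i_1\dots i_d}}$ and norm $\|\cdot\|$; $\bigcirc$ is the outer product; $(\mathcal{Z}\times_j\mathbf{U})_{i_1,\dots,\ell,\dots,i_d}=\sum_{i_j}\mathcal{Z}_{i_1,\dots,i_j,\dots,i_d}\mathbf{U}_{\ell,i_j}$; $\mathrm{i}$ is the imaginary unit, $e$ Euler's number. A matrix is an $\epsilon$-JL embedding of $S$ if $\|\mathbf{A}x\|_2^2=(1+\epsilon_x)\|x\|_2^2$ with $\epsilon_x\in(-\epsilon,\epsilon)$ for all $x\in S$. For a basis $\{\bigcirc_\ell\mathbf{y}^{(\ell)}_k\}_{k\in[r]}$ of unit-vector rank-one tensors, $\mu_{\mathcal{B}}=\max_{\ell\in[d]}\max_{k\ne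 h}|\langle\mathbf{y}^{(\ell)}_k,\mathbf{y}^{(\ell)}_h\rangle|$. *)

theory Defs
  imports Complex_Main "HOL-Library.FuncSet"
begin

text \<open>An order-d tensor with mode sizes n 0, ..., n (d-1) is a function
  from multi-indices (nat => nat) to complex; only its values on
  tidx d n = PiE {..<d} (%l. {..<n l}) are meaningful. Modes are numbered 0..d-1.
  A matrix M in C^{p x q} is a function nat => nat => complex, entry M a b for a<p, b<q.
  A vector in C^q is a function nat => complex, only entries b<q matter.\<close>

definition tidx :: "nat \<Rightarrow> (nat \<Rightarrow> nat) \<Rightarrow> (nat \<Rightarrow> nat) set" where
  "tidx d n = PiE {..<d} (\<lambda>l. {..<n l})"

definition tnorm2 :: "(nat \<Rightarrow> nat) set \<Rightarrow> ((nat \<Rightarrow> nat) \<Rightarrow> complex) \<Rightarrow> real" where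
  "tnorm2 I X = (\<Sum>i\<in>I. (cmod (X i))\<^sup>2)"

definition mode_prod :: "nat \<Rightarrow> nat \<Rightarrow> ((nat \<Rightarrow> nat) \<Rightarrow> complex) \<Rightarrow> (nat \<Rightarrow> nat \<Rightarrow> complex)
    \<Rightarrow> ((nat \<Rightarrow> nat) \<Rightarrow> complex)" where
  "mode_prod N j Z U = (\<lambda>i. \<Sum>k<N. Z (i(j := k)) * U (i j) k)"

fun multi_mode :: "(nat \<Rightarrow> nat) \<Rightarrow> (nat \<Rightarrow> nat \<Rightarrow> nat \<Rightarrow> complex) \<Rightarrow> ((nat \<Rightarrow> nat) \<Rightarrow> complex)
    \<Rightarrow> nat \<Rightarrow> ((nat \<Rightarrow> nat) \<Rightarrow> complex)" where
  "multi_mode n M Z 0 = Z"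
| "multi_mode n M Z (Suc j) = mode_prod (n j) j (multi_mode n M Z j) (M j)"

definition unitary_mat :: "nat \<Rightarrow> (nat \<Rightarrow> nat \<Rightarrow> complex) \<Rightarrow> bool" where
  "unitary_mat N U \<longleftrightarrow> (\<forall>a<N. \<forall>b<N. (\<Sum>k<N. cnj (U k a) * U k b) = (if a = b then 1 else 0))"

definition col :: "(nat \<Rightarrow> nat \<Rightarrow> complex) \<Rightarrow> nat \<Rightarrow> (nat \<Rightarrow> complex)" where
  "col U b = (\<lambda>a. U a b)"

definition vnorm2 :: "nat \<Rightarrow> (nat \<Rightarrow> complex) \<Rightarrow> real" where
  "vnorm2 N x = (\<Sum>a<N. (cmod (x a))\<^sup>2)"

definition vinner :: "nat \<Rightarrow> (nat \<Rightarrow> complex) \<Rightarrow> (nat \<Rightarrow> complex) \<Rightarrow> complex" where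
  "vinner N x y = (\<Sum>a<N. x a * cnj (y a))"

definition mat_vec :: "nat \<Rightarrow> (nat \<Rightarrow> nat \<Rightarrow> complex) \<Rightarrow> (nat \<Rightarrow> complex) \<Rightarrow> (nat \<Rightarrow> complex)" where
  "mat_vec N A x = (\<lambda>a. \<Sum>b<N. A a b * x b)"

definition JL_embedding :: "real \<Rightarrow> nat \<Rightarrow> nat \<Rightarrow> (nat \<Rightarrow> nat \<Rightarrow> complex) \<Rightarrow> (nat \<Rightarrow> complex) set \<Rightarrow> bool" where
  "JL_embedding eps p q A X \<longleftrightarrow>
     (\<forall>x\<in>X. \<exists>ex. -eps < ex \<and> ex < eps \<and> vnorm2 p (mat_vec q A x) = (1 + ex) * vnorm2 q x)"

definition JL_set :: "(nat \<Rightarrow> nat \<Rightarrow> complex) \<Rightarrow> nat \<Rightarrow> (nat \<Rightarrow> nat) set \<Rightarrow> (nat \<Rightarrow> complex) set" where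
  "JL_set U j S =
     (\<Union>i\<in>S. \<Union>i'\<in>S - {i}.
        {(\<lambda>a. col U (i j) a + col U (i' j) a), (\<lambda>a. col U (i j) a - col U (i' j) a),
         (\<lambda>a. col U (i j) a + \<i> * col U (i' j) a), (\<lambda>a. col U (i j) a - \<i> * col U (i' j) a)})
     \<union> (\<lambda>i. col U (i j)) ` S"

text \<open>Coherence mu_B of the basis {outer_l U^(l)_{i_l} : i in S} (0 if there is no pair k ~= h).\<close>
definition coherence :: "nat \<Rightarrow> (nat \<Rightarrow> nat) \<Rightarrow> (nat \<Rightarrow> nat \<Rightarrow> nat \<Rightarrow> complex) \<Rightarrow> (nat \<Rightarrow> nat) set \<Rightarrow> real" where
  "coherence d n U S = Max (insert 0
     {cmod (vinner (n l) (col (U l) (i l)) (col (U l) (i' l))) | l i i'. l < d \<and> i \<in> S \<and> i' \<in> S \<and> i \<noteq> i'})"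

definition tucker_space :: "nat \<Rightarrow> (nat \<Rightarrow> nat) \<Rightarrow> (nat \<Rightarrow> nat \<Rightarrow> nat \<Rightarrow> complex) \<Rightarrow> (nat \<Rightarrow> nat) set
    \<Rightarrow> ((nat \<Rightarrow> nat) \<Rightarrow> complex) set" where
  "tucker_space d n U S = {multi_mode n U C d | C. \<forall>i\<in>tidx d n - S. C i = 0}"

end

theory Submission
  imports Defs
begin


lemma mm_expand:
  "multi_mode p M Z j i = (\<Sum>k\<in>PiE {..<j} (\<lambda>l. {..<p l}).
      Z (\<lambda>l. if l < j then k l else i l) * (\<Prod>l<j. M l (i l) (k l)))"
proof (induction j arbitrary: i)
  case 0
  then show ?case by simp
next
  case (Suc j)
  have "multi_mode p M Z (Suc j) i = (\<Sum>t<p j. multi_mode p M Z j (i(j:=t)) * M j (i j) t)"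
    by (simp add: mode_prod_def)
  also have "\<dots> = (\<Sum>t<p j. \<Sum>k\<in>PiE {..<j} (\<lambda>l. {..<p l}).
      Z (\<lambda>l. if l < Suc j then (k(j:=t)) l else i l) * (\<Prod>l<Suc j. M l (i l) ((k(j:=t)) l)))"
  proof (rule sum.cong[OF refl])
    fix t assume "t \<in> {..<p j}"
    show "multi_mode p M Z j (i(j:=t)) * M j (i j) t = (\<Sum>k\<in>PiE {..<j} (\<lambda>l. {..<p l}).
      Z (\<lambda>l. if l < Suc j then (k(j:=t)) l else i l) * (\<Prod>l<Suc j. M l (i l) ((k(j:=t)) l)))"
      unfolding Suc.IH sum_distrib_right
    proof (rule sum.cong[OF refl])
      fix k assume "k \<in> PiE {..<j} (\<lambda>l. {..<p l})"
      have e1: "(\<lambda>l. if l < j then k l else (i(j := t)) l) = (\<lambda>l. if l < Suc j then (k(j:=t)) l else i l)"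
        by (auto simp: fun_eq_iff)
      have e2: "(\<Prod>l<Suc j. M l (i l) ((k(j:=t)) l)) = (\<Prod>l<j. M l (i l) (k l)) * M j (i j) t"
        by (simp add: prod.lessThan_Suc)
      have e3: "(\<Prod>l<j. M l ((i(j := t)) l) (k l)) = (\<Prod>l<j. M l (i l) (k l))"
        by (rule prod.cong) auto
      show "Z (\<lambda>l. if l < j then k l else (i(j := t)) l) * (\<Prod>l<j. M l ((i(j := t)) l) (k l)) * M j (i j) t
         = Z (\<lambda>l. if l < Suc j then (k(j:=t)) l else i l) * (\<Prod>l<Suc j. M l (i l) ((k(j:=t)) l))"
        unfolding e1 e2 e3 by (simp add: mult.assoc)
    qed
  qed
  also have "\<dots> = (\<Sum>(t,k)\<in>{..<p j} \<times> PiE {..<j} (\<lambda>l. {..<p l}).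
      Z (\<lambda>l. if l < Suc j then (k(j:=t)) l else i l) * (\<Prod>l<Suc j. M l (i l) ((k(j:=t)) l)))"
    by (simp add: sum.cartesian_product)
  also have "\<dots> = (\<Sum>k\<in>PiE {..<Suc j} (\<lambda>l. {..<p l}).
      Z (\<lambda>l. if l < Suc j then k l else i l) * (\<Prod>l<Suc j. M l (i l) (k l)))"
  proof -
    have im: "PiE {..<Suc j} (\<lambda>l. {..<p l}) = (\<lambda>x. (snd x)(j:=fst x)) ` ({..<p j} \<times> PiE {..<j} (\<lambda>l. {..<p l}))"
      by (simp add: lessThan_Suc PiE_insert_eq case_prod_unfold)
    have inj: "inj_on (\<lambda>x. (snd x)(j:=fst x)) ({..<p j} \<times> PiE {..<j} (\<lambda>l. {..<p l}))"
      using inj_combinator[of j "{..<j}" "\<lambda>l. {..<p l}"] by (simp add: case_prod_unfold)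
    show ?thesis unfolding im sum.reindex[OF inj] by (simp only: o_def case_prod_unfold)
  qed
  finally show ?case .
qed

lemma mm_expand_tidx:
  assumes "i \<in> tidx d q"
  shows "multi_mode p M Z d i = (\<Sum>k\<in>tidx d p. Z k * (\<Prod>l<d. M l (i l) (k l)))"
  unfolding mm_expand tidx_def
proof (rule sum.cong[OF refl])
  fix k assume k: "k \<in> PiE {..<d} (\<lambda>l. {..<p l})"
  have "(\<lambda>l. if l < d then k l else i l) = k"
    using k assms unfolding tidx_def by (auto simp: fun_eq_iff PiE_def extensional_def)
  then show "Z (\<lambda>l. if l < d then k l else i l) * (\<Prod>l<d. M l (i l) (k l)) = Z k * (\<Prod>l<d. M l (i l) (k l))"
    by simp
qed



lemma finite_tidx[simp]: "finite (tidx d p)"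
  unfolding tidx_def by (auto intro!: finite_PiE)

lemma gram:
  assumes S: "finite S"
  shows "complex_of_real (tnorm2 (tidx d p) (\<lambda>i. \<Sum>s\<in>S. c s * (\<Prod>l<d. w l s (i l))))
     = (\<Sum>s\<in>S. \<Sum>s'\<in>S. c s * cnj (c s') * (\<Prod>l<d. vinner (p l) (w l s) (w l s')))"
proof -
  have "complex_of_real (tnorm2 (tidx d p) (\<lambda>i. \<Sum>s\<in>S. c s * (\<Prod>l<d. w l s (i l))))
     = (\<Sum>i\<in>tidx d p. (\<Sum>s\<in>S. c s * (\<Prod>l<d. w l s (i l))) * cnj (\<Sum>s\<in>S. c s * (\<Prod>l<d. w l s (i l))))"
    unfolding tnorm2_def of_real_sum complex_norm_square by simp
  also have "\<dots> = (\<Sum>i\<in>tidx d p. \<Sum>s\<in>S. \<Sum>s'\<in>S. c s * cnj (c s') * (\<Prod>l<d. w l s (i l) * cnj (w l s' (i l))))"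
    unfolding cnj_sum sum_product
    by (intro sum.cong refl) (simp add: prod.distrib cnj_prod mult_ac)
  also have "\<dots> = (\<Sum>s\<in>S. \<Sum>s'\<in>S. \<Sum>i\<in>tidx d p. c s * cnj (c s') * (\<Prod>l<d. w l s (i l) * cnj (w l s' (i l))))"
    by (subst sum.swap) (simp add: sum.swap[of _ "tidx d p"])
  also have "\<dots> = (\<Sum>s\<in>S. \<Sum>s'\<in>S. c s * cnj (c s') * (\<Prod>l<d. vinner (p l) (w l s) (w l s')))"
  proof (intro sum.cong refl)
    fix s s'
    have "(\<Prod>l<d. vinner (p l) (w l s) (w l s')) = (\<Sum>i\<in>tidx d p. \<Prod>l<d. w l s (i l) * cnj (w l s' (i l)))"
      unfolding vinner_def tidx_def by (rule prod_sum_PiE) auto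
    then show "(\<Sum>i\<in>tidx d p. c s * cnj (c s') * (\<Prod>l<d. w l s (i l) * cnj (w l s' (i l))))
       = c s * cnj (c s') * (\<Prod>l<d. vinner (p l) (w l s) (w l s'))"
      by (simp add: sum_distrib_left)
  qed
  finally show ?thesis .
qed

lemma prod_abs_diff:
  fixes a b :: "nat \<Rightarrow> complex"
  assumes "\<And>l. l < k \<Longrightarrow> cmod (a l - b l) \<le> e" "\<And>l. l < k \<Longrightarrow> cmod (b l) \<le> beta"
    and "0 \<le> e" "0 \<le> beta"
  shows "cmod ((\<Prod>l<k. a l) - (\<Prod>l<k. b l)) \<le> (beta + e) ^ k - beta ^ k"
  using assms(1,2)
proof (induction k)
  case 0
  then show ?case by simp
next
  case (Suc k)
  let ?A = "\<Prod>l<k. a l" and ?B = "\<Prod>l<k. b l"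
  have IH: "cmod (?A - ?B) \<le> (beta + e) ^ k - beta ^ k" using Suc by auto
  have ak: "cmod (a k) \<le> beta + e"
    using Suc.prems(1)[of k] Suc.prems(2)[of k] norm_triangle_ineq[of "a k - b k" "b k"] by simp
  have Bk: "cmod ?B \<le> beta ^ k"
  proof -
    have "(\<Prod>l<k. cmod (b l)) \<le> (\<Prod>l<k. beta)"
      using Suc.prems(2) by (intro prod_mono) auto
    then show ?thesis by (simp add: prod_norm[symmetric])
  qed
  have "(\<Prod>l<Suc k. a l) - (\<Prod>l<Suc k. b l) = (?A - ?B) * a k + ?B * (a k - b k)"
    by (simp add: algebra_simps)
  then have "cmod ((\<Prod>l<Suc k. a l) - (\<Prod>l<Suc k. b l)) \<le> cmod (?A - ?B) * cmod (a k) + cmod ?B * cmod (a k - b k)"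
    by (metis norm_mult norm_triangle_ineq)
  also have "\<dots> \<le> ((beta + e) ^ k - beta ^ k) * (beta + e) + beta ^ k * e"
    using Suc.prems(1)[of k] IH ak Bk assms(3,4) power_mono[of beta "beta + e" k]
    by (intro add_mono mult_mono) auto
  also have "\<dots> = (beta + e) ^ Suc k - beta ^ Suc k" by (simp add: algebra_simps)
  finally show ?case .
qed



lemma pol_term: "4 * (x * cnj y) = complex_of_real ((cmod (x + y))\<^sup>2) - complex_of_real ((cmod (x - y))\<^sup>2)
   + \<i> * complex_of_real ((cmod (x + \<i> * y))\<^sup>2) - \<i> * complex_of_real ((cmod (x - \<i> * y))\<^sup>2)"
  unfolding complex_norm_square by (simp add: algebra_simps)

lemma par_term: "(cmod (x + y))\<^sup>2 + (cmod (x - y))\<^sup>2 + (cmod (x + \<i> * y))\<^sup>2 + (cmod (x - \<i> * y))\<^sup>2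
   = 4 * ((cmod x)\<^sup>2 + (cmod y)\<^sup>2)"
proof -
  have "complex_of_real ((cmod (x + y))\<^sup>2 + (cmod (x - y))\<^sup>2 + (cmod (x + \<i> * y))\<^sup>2 + (cmod (x - \<i> * y))\<^sup>2)
     = complex_of_real (4 * ((cmod x)\<^sup>2 + (cmod y)\<^sup>2))"
    unfolding of_real_add of_real_mult complex_norm_square by (simp add: algebra_simps)
  then show ?thesis using of_real_eq_iff by blast
qed

lemma pol_vec: "4 * vinner N x y = complex_of_real (vnorm2 N (\<lambda>a. x a + y a)) - complex_of_real (vnorm2 N (\<lambda>a. x a - y a))
   + \<i> * complex_of_real (vnorm2 N (\<lambda>a. x a + \<i> * y a)) - \<i> * complex_of_real (vnorm2 N (\<lambda>a. x a - \<i> * y a))"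
  unfolding vinner_def vnorm2_def of_real_sum sum_distrib_left pol_term sum_subtractf[symmetric] sum.distrib[symmetric]
  by (simp add: algebra_simps)

lemma par_vec: "vnorm2 N (\<lambda>a. x a + y a) + vnorm2 N (\<lambda>a. x a - y a) + vnorm2 N (\<lambda>a. x a + \<i> * y a) + vnorm2 N (\<lambda>a. x a - \<i> * y a)
   = 4 * (vnorm2 N x + vnorm2 N y)"
  unfolding vnorm2_def sum.distrib[symmetric] sum_distrib_left par_term by simp

lemma mat_vec_lin: "mat_vec N A (\<lambda>a. x a + c * y a) = (\<lambda>a. mat_vec N A x a + c * mat_vec N A y a)"
  "mat_vec N A (\<lambda>a. x a + y a) = (\<lambda>a. mat_vec N A x a + mat_vec N A y a)"
  "mat_vec N A (\<lambda>a. x a - c * y a) = (\<lambda>a. mat_vec N A x a - c * mat_vec N A y a)"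
  "mat_vec N A (\<lambda>a. x a - y a) = (\<lambda>a. mat_vec N A x a - mat_vec N A y a)"
  unfolding mat_vec_def by (auto simp: algebra_simps sum.distrib sum_subtractf sum_distrib_left)

lemma four_tri: "cmod (a - b + c - d) \<le> cmod a + cmod b + cmod c + cmod d"
proof -
  have "cmod (a - b + c - d) \<le> cmod (a - b + c) + cmod d" by (rule norm_triangle_ineq4)
  also have "cmod (a - b + c) \<le> cmod (a - b) + cmod c" by (rule norm_triangle_ineq)
  also have "cmod (a - b) \<le> cmod a + cmod b" by (rule norm_triangle_ineq4)
  finally show ?thesis by simp
qed

lemma polar:
  fixes x y :: "nat \<Rightarrow> complex"
  assumes JL: "\<And>z. z \<in> {(\<lambda>a. x a + y a), (\<lambda>a. x a - y a), (\<lambda>a. x a + \<i> * y a), (\<lambda>a. x a - \<i> * y a)} \<Longrightarrow>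
      \<exists>ex. - dl < ex \<and> ex < dl \<and> vnorm2 M (mat_vec N A z) = (1 + ex) * vnorm2 N z"
  shows "cmod (vinner M (mat_vec N A x) (mat_vec N A y) - vinner N x y) \<le> dl * (vnorm2 N x + vnorm2 N y)"
proof -
  obtain e1 where e1: "- dl < e1" "e1 < dl" "vnorm2 M (mat_vec N A (\<lambda>a. x a + y a)) = (1 + e1) * vnorm2 N (\<lambda>a. x a + y a)"
    using JL by blast
  obtain e2 where e2: "- dl < e2" "e2 < dl" "vnorm2 M (mat_vec N A (\<lambda>a. x a - y a)) = (1 + e2) * vnorm2 N (\<lambda>a. x a - y a)"
    using JL by blast
  obtain e3 where e3: "- dl < e3" "e3 < dl" "vnorm2 M (mat_vec N A (\<lambda>a. x a + \<i> * y a)) = (1 + e3) * vnorm2 N (\<lambda>a. x a + \<i> * y a)"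
    using JL by blast
  obtain e4 where e4: "- dl < e4" "e4 < dl" "vnorm2 M (mat_vec N A (\<lambda>a. x a - \<i> * y a)) = (1 + e4) * vnorm2 N (\<lambda>a. x a - \<i> * y a)"
    using JL by blast
  define n1 where "n1 = vnorm2 N (\<lambda>a. x a + y a)"
  define n2 where "n2 = vnorm2 N (\<lambda>a. x a - y a)"
  define n3 where "n3 = vnorm2 N (\<lambda>a. x a + \<i> * y a)"
  define n4 where "n4 = vnorm2 N (\<lambda>a. x a - \<i> * y a)"
  have nn: "0 \<le> n1" "0 \<le> n2" "0 \<le> n3" "0 \<le> n4"
    unfolding n1_def n2_def n3_def n4_def vnorm2_def by (auto intro!: sum_nonneg)
  have "4 * (vinner M (mat_vec N A x) (mat_vec N A y) - vinner N x y)
     = complex_of_real (e1 * n1) - complex_of_real (e2 * n2) + \<i> * complex_of_real (e3 * n3) - \<i> * complex_of_real (e4 * n4)"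
    unfolding right_diff_distrib pol_vec mat_vec_lin[symmetric] e1(3) e2(3) e3(3) e4(3) n1_def n2_def n3_def n4_def
    by (simp add: algebra_simps)
  then have "4 * cmod (vinner M (mat_vec N A x) (mat_vec N A y) - vinner N x y)
     = cmod (complex_of_real (e1 * n1) - complex_of_real (e2 * n2) + \<i> * complex_of_real (e3 * n3) - \<i> * complex_of_real (e4 * n4))"
    by (metis norm_mult norm_numeral)
  also have "\<dots> \<le> \<bar>e1 * n1\<bar> + \<bar>e2 * n2\<bar> + \<bar>e3 * n3\<bar> + \<bar>e4 * n4\<bar>"
    using four_tri[of "complex_of_real (e1 * n1)" "complex_of_real (e2 * n2)" "\<i> * complex_of_real (e3 * n3)" "\<i> * complex_of_real (e4 * n4)"]
    by (simp only: norm_mult norm_of_real norm_ii mult_1_left)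
  also have "\<dots> \<le> dl * n1 + dl * n2 + dl * n3 + dl * n4"
    using e1 e2 e3 e4 nn by (intro add_mono) (auto simp: abs_mult intro!: mult_right_mono)
  also have "\<dots> = dl * (n1 + n2 + n3 + n4)" by (simp add: algebra_simps)
  also have "\<dots> = 4 * (dl * (vnorm2 N x + vnorm2 N y))"
    using par_vec[of N x y] unfolding n1_def n2_def n3_def n4_def by simp
  finally show ?thesis by simp
qed



lemma numD:
  assumes "1 \<le> d" "0 < eps" "eps \<le> 3/4"
  shows "(1 + eps / (4 * real d)) ^ d - 1 \<le> eps / 2"
proof -
  have "(1 + eps / (4 * real d)) ^ d \<le> exp (eps / (4 * real d)) ^ d"
    using assms by (intro power_mono) auto
  also have "\<dots> = exp (real d * (eps / (4 * real d)))" by (simp only: exp_of_nat_mult)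
  also have "real d * (eps / (4 * real d)) = eps / 4" using assms by simp
  also have "exp (eps / 4) \<le> 1 + 2 * (eps / 4)"
    using exp_bound_lemma[of "eps / 4"] assms by simp
  finally show ?thesis by simp
qed

lemma pow_diff_le:
  fixes x y :: real
  assumes "0 \<le> y" "y \<le> x"
  shows "x ^ k - y ^ k \<le> real k * (x - y) * x ^ (k - 1)"
proof (induction k)
  case 0 then show ?case by simp
next
  case (Suc k)
  have "x ^ Suc k - y ^ Suc k = x * (x ^ k - y ^ k) + y ^ k * (x - y)" by (simp add: algebra_simps)
  also have "\<dots> \<le> x * (real k * (x - y) * x ^ (k - 1)) + x ^ k * (x - y)"
    using Suc assms by (intro add_mono mult_left_mono mult_right_mono power_mono) auto
  also have "\<dots> = real (Suc k) * (x - y) * x ^ (Suc k - 1)"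
  proof (cases k)
    case 0 then show ?thesis by simp
  next
    case (Suc j) then show ?thesis by (simp add: algebra_simps)
  qed
  finally show ?case .
qed

lemma numO:
  assumes "1 \<le> d" "0 < eps" "0 \<le> mu"
  shows "(mu + 2 * (eps / (4 * real d))) ^ d - mu ^ d \<le> eps / 2 * exp 1 * (max eps mu) ^ (d - 1)"
proof -
  let ?M = "max eps mu"
  have dpos: "0 < real d" using assms by simp
  have first: "(mu + 2 * (eps / (4 * real d))) ^ d - mu ^ d
      \<le> eps / 2 * (mu + 2 * (eps / (4 * real d))) ^ (d - 1)"
    using pow_diff_le[of mu "mu + 2 * (eps / (4 * real d))" d] assms dpos by simp
  have "mu + 2 * (eps / (4 * real d)) \<le> ?M * (1 + 1 / (2 * real d))"
  proof -
    have "2 * (eps / (4 * real d)) = eps / (2 * real d)" by simp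
    also have "\<dots> \<le> ?M / (2 * real d)" using dpos by (intro divide_right_mono) auto
    finally show ?thesis using dpos by (simp add: algebra_simps)
  qed
  then have "(mu + 2 * (eps / (4 * real d))) ^ (d - 1) \<le> (?M * (1 + 1 / (2 * real d))) ^ (d - 1)"
    using assms dpos by (intro power_mono) auto
  also have "\<dots> = ?M ^ (d - 1) * (1 + 1 / (2 * real d)) ^ (d - 1)" by (simp add: power_mult_distrib)
  also have "(1 + 1 / (2 * real d)) ^ (d - 1) \<le> exp 1"
  proof -
    have "(1 + 1 / (2 * real d)) ^ (d - 1) \<le> exp (1 / (2 * real d)) ^ (d - 1)"
      using dpos by (intro power_mono) auto
    also have "\<dots> = exp (real (d - 1) * (1 / (2 * real d)))" by (simp only: exp_of_nat_mult)
    also have "\<dots> \<le> exp 1"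
      using dpos assms(1) by (simp add: field_simps of_nat_diff)
    finally show ?thesis .
  qed
  then have "?M ^ (d - 1) * (1 + 1 / (2 * real d)) ^ (d - 1) \<le> ?M ^ (d - 1) * exp 1"
    using assms by (intro mult_left_mono) auto
  finally have "(mu + 2 * (eps / (4 * real d))) ^ (d - 1) \<le> ?M ^ (d - 1) * exp 1" .
  then have "eps / 2 * (mu + 2 * (eps / (4 * real d))) ^ (d - 1) \<le> eps / 2 * (?M ^ (d - 1) * exp 1)"
    using assms by (intro mult_left_mono) auto
  with first show ?thesis by (simp add: mult_ac)
qed



lemma cs_pairs:
  fixes f :: "'a \<Rightarrow> real"
  assumes S: "finite S"
  shows "(\<Sum>s\<in>S. \<Sum>s'\<in>S - {s}. f s * f s') \<le> real (card S - 1) * (\<Sum>s\<in>S. (f s)\<^sup>2)"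
proof -
  have "(\<Sum>s\<in>S. \<Sum>s'\<in>S - {s}. f s * f s') \<le> (\<Sum>s\<in>S. \<Sum>s'\<in>S - {s}. ((f s)\<^sup>2 + (f s')\<^sup>2) / 2)"
  proof (intro sum_mono)
    fix s s' show "f s * f s' \<le> ((f s)\<^sup>2 + (f s')\<^sup>2) / 2"
      using sum_squares_ge_zero[of "f s - f s'" 0] by (simp add: power2_eq_square algebra_simps)
  qed
  also have "\<dots> = (\<Sum>s\<in>S. (real (card S - 1) * (f s)\<^sup>2 + ((\<Sum>t\<in>S. (f t)\<^sup>2) - (f s)\<^sup>2)) / 2)"
  proof (intro sum.cong refl)
    fix s assume s: "s \<in> S"
    have c: "card (S - {s}) = card S - 1" using s S by simp
    have "(\<Sum>t\<in>S. (f t)\<^sup>2) = (f s)\<^sup>2 + (\<Sum>t\<in>S - {s}. (f t)\<^sup>2)"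
      using s S by (simp add: sum.remove)
    then show "(\<Sum>s'\<in>S - {s}. ((f s)\<^sup>2 + (f s')\<^sup>2) / 2) = (real (card S - 1) * (f s)\<^sup>2 + ((\<Sum>t\<in>S. (f t)\<^sup>2) - (f s)\<^sup>2)) / 2"
      by (simp add: sum_divide_distrib[symmetric] sum.distrib c)
  qed
  also have "\<dots> = (real (card S - 1) * (\<Sum>s\<in>S. (f s)\<^sup>2) + (real (card S) * (\<Sum>t\<in>S. (f t)\<^sup>2) - (\<Sum>s\<in>S. (f s)\<^sup>2))) / 2"
    by (simp add: sum_divide_distrib[symmetric] sum.distrib sum_subtractf sum_distrib_left)
  also have "\<dots> = real (card S - 1) * (\<Sum>s\<in>S. (f s)\<^sup>2)"
  proof (cases "card S")
    case 0 then show ?thesis using S by simp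
  next
    case (Suc k) then show ?thesis by (simp add: algebra_simps)
  qed
  finally show ?thesis .
qed

lemma le_e2:
  fixes x e :: real assumes "0 \<le> x" "1 \<le> e" shows "x \<le> e * x * e"
proof -
  have "1 * 1 \<le> e * e" by (rule mult_mono) (use assms in auto)
  then have "x * 1 \<le> x * (e * e)" using assms by (intro mult_left_mono) auto
  then show ?thesis by (simp add: mult_ac)
qed

lemma le_half_e:
  fixes x e :: real assumes "0 \<le> x" "1 \<le> e" shows "x / 2 \<le> x * e"
proof -
  have "x * 1 \<le> x * e" using assms by (intro mult_left_mono) auto
  then show ?thesis using assms by simp
qed

lemma unit_cols:
  assumes "unitary_mat N U" "a < N" "b < N"
  shows "vinner N (col U a) (col U b) = (if a = b then 1 else 0)"
proof -
  have "vinner N (col U a) (col U b) = cnj (\<Sum>k<N. cnj (U k a) * U k b)"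
    unfolding vinner_def col_def cnj_sum by simp
  also have "\<dots> = (if a = b then 1 else 0)" using assms unfolding unitary_mat_def by simp
  finally show ?thesis .
qed

lemma vinner_self: "vinner N x x = complex_of_real (vnorm2 N x)"
  unfolding vinner_def vnorm2_def of_real_sum complex_norm_square by simp

theorem corollary3:
  fixes d :: nat and n m :: "nat \<Rightarrow> nat"
    and U A :: "nat \<Rightarrow> nat \<Rightarrow> nat \<Rightarrow> complex"
    and S :: "(nat \<Rightarrow> nat) set" and r :: nat and eps :: real
    and Y :: "(nat \<Rightarrow> nat) \<Rightarrow> complex"
  assumes d: "d \<ge> 1"
    and unitary: "\<forall>j<d. unitary_mat (n j) (U j)"
    and S: "S \<subseteq> tidx d n" and r: "card S = r"
    and eps: "0 < eps" "eps \<le> 3/4"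
    and JL: "\<forall>j<d. JL_embedding (eps / (4 * d)) (m j) (n j) (A j) (JL_set (U j) j S)"
    and Y: "Y \<in> tucker_space d n U S"
  shows "\<bar>tnorm2 (tidx d n) Y - tnorm2 (tidx d m) (multi_mode n A Y d)\<bar>
         \<le> (if coherence d n U S = 0
            then (eps + exp 1 * sqrt (real r * (real r - 1)) * eps ^ d) * exp 1
            else eps * (exp 1 + (exp 1)\<^sup>2 * sqrt (real r * (real r - 1))
                     * max (eps ^ (d - 1)) (coherence d n U S ^ (d - 1))))
           * tnorm2 (tidx d n) Y"
proof -
  obtain C where Ydef: "Y = multi_mode n U C d" and C0: "\<forall>i\<in>tidx d n - S. C i = 0"
    using Y unfolding tucker_space_def by blast
  have finS: "finite S" using S finite_subset finite_tidx by blast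
  define dl where "dl = eps / (4 * real d)"
  have dl_pos: "0 < dl" unfolding dl_def using eps d by simp
  define w where "w = (\<lambda>l s. col (U l) (s l))"
  define v where "v = (\<lambda>l s. mat_vec (n l) (A l) (col (U l) (s l)))"
  define mu where "mu = coherence d n U S"
  have sl: "s l < n l" if "s \<in> S" "l < d" for s l
    using that S unfolding tidx_def by (auto simp: PiE_def Pi_def)
  have Yform: "Y i = (\<Sum>s\<in>S. C s * (\<Prod>l<d. w l s (i l)))" if i: "i \<in> tidx d n" for i
  proof -
    have "Y i = (\<Sum>k\<in>tidx d n. C k * (\<Prod>l<d. U l (i l) (k l)))"
      unfolding Ydef by (rule mm_expand_tidx[OF i])
    also have "\<dots> = (\<Sum>k\<in>S. C k * (\<Prod>l<d. U l (i l) (k l)))"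
      using C0 S by (intro sum.mono_neutral_right) auto
    finally show ?thesis by (simp add: w_def col_def)
  qed
  have AYform: "multi_mode n A Y d i = (\<Sum>s\<in>S. C s * (\<Prod>l<d. v l s (i l)))" if i: "i \<in> tidx d m" for i
  proof -
    have "multi_mode n A Y d i = (\<Sum>k\<in>tidx d n. Y k * (\<Prod>l<d. A l (i l) (k l)))"
      by (rule mm_expand_tidx[OF i])
    also have "\<dots> = (\<Sum>k\<in>tidx d n. \<Sum>s\<in>S. C s * (\<Prod>l<d. A l (i l) (k l) * U l (k l) (s l)))"
      by (intro sum.cong refl) (simp add: Yform sum_distrib_left w_def col_def prod.distrib mult_ac)
    also have "\<dots> = (\<Sum>s\<in>S. C s * (\<Sum>k\<in>tidx d n. \<Prod>l<d. A l (i l) (k l) * U l (k l) (s l)))"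
      by (subst sum.swap) (simp add: sum_distrib_left)
    also have "\<dots> = (\<Sum>s\<in>S. C s * (\<Prod>l<d. v l s (i l)))"
    proof (intro sum.cong refl arg_cong2[where f = "(*)"])
      fix s
      show "(\<Sum>k\<in>tidx d n. \<Prod>l<d. A l (i l) (k l) * U l (k l) (s l)) = (\<Prod>l<d. v l s (i l))"
        unfolding v_def mat_vec_def col_def tidx_def by (rule prod_sum_PiE[symmetric]) auto
    qed
    finally show ?thesis .
  qed
  have nY: "tnorm2 (tidx d n) Y = tnorm2 (tidx d n) (\<lambda>i. \<Sum>s\<in>S. C s * (\<Prod>l<d. w l s (i l)))"
    unfolding tnorm2_def by (intro sum.cong refl) (simp add: Yform)
  have nAY: "tnorm2 (tidx d m) (multi_mode n A Y d) = tnorm2 (tidx d m) (\<lambda>i. \<Sum>s\<in>S. C s * (\<Prod>l<d. v l s (i l)))"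
    unfolding tnorm2_def by (intro sum.cong refl) (simp add: AYform)
  define G where "G = (\<lambda>s s'. \<Prod>l<d. vinner (n l) (w l s) (w l s'))"
  define H where "H = (\<lambda>s s'. \<Prod>l<d. vinner (m l) (v l s) (v l s'))"
  have gY: "complex_of_real (tnorm2 (tidx d n) Y) = (\<Sum>s\<in>S. \<Sum>s'\<in>S. C s * cnj (C s') * G s s')"
    unfolding nY G_def by (rule gram[OF finS])
  have gAY: "complex_of_real (tnorm2 (tidx d m) (multi_mode n A Y d)) = (\<Sum>s\<in>S. \<Sum>s'\<in>S. C s * cnj (C s') * H s s')"
    unfolding nAY H_def by (rule gram[OF finS])
  have winner: "vinner (n l) (w l s) (w l s') = (if s l = s' l then 1 else 0)" if "s \<in> S" "s' \<in> S" "l < d" for l s s'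
    unfolding w_def using unit_cols[of "n l" "U l" "s l" "s' l"] unitary that sl by auto
  have Gdiag: "G s s = 1" if "s \<in> S" for s
    unfolding G_def using winner that by simp
  have Goff: "G s s' = 0" if "s \<in> S" "s' \<in> S" "s \<noteq> s'" for s s'
  proof -
    have "\<exists>l<d. s l \<noteq> s' l"
    proof (rule ccontr)
      assume "\<not> ?thesis"
      then have "s = s'" using that S unfolding tidx_def by (intro PiE_ext[of s "{..<d}" _ s']) auto
      then show False using that by simp
    qed
    then obtain l where "l < d" "s l \<noteq> s' l" by blast
    then show ?thesis unfolding G_def using winner[OF that(1,2)] by (intro prod_zero) auto
  qed
  define Nc where "Nc = (\<Sum>s\<in>S. (cmod (C s))\<^sup>2)"
  have normY: "tnorm2 (tidx d n) Y = Nc"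
  proof -
    have "complex_of_real (tnorm2 (tidx d n) Y) = (\<Sum>s\<in>S. C s * cnj (C s))"
      unfolding gY
    proof (intro sum.cong refl)
      fix s assume s: "s \<in> S"
      have "(\<Sum>s'\<in>S. C s * cnj (C s') * G s s') = C s * cnj (C s) * G s s + (\<Sum>s'\<in>S - {s}. C s * cnj (C s') * G s s')"
        using s finS by (simp add: sum.remove)
      also have "(\<Sum>s'\<in>S - {s}. C s * cnj (C s') * G s s') = 0"
        using Goff s by (intro sum.neutral) auto
      finally show "(\<Sum>s'\<in>S. C s * cnj (C s') * G s s') = C s * cnj (C s)" using Gdiag s by simp
    qed
    also have "\<dots> = complex_of_real Nc" unfolding Nc_def of_real_sum complex_norm_square ..
    finally show ?thesis using of_real_eq_iff by blast
  qed
  have Nc_nn: "0 \<le> Nc" unfolding Nc_def by (intro sum_nonneg) auto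
  have colnorm: "vnorm2 (n l) (col (U l) (s l)) = 1" if "s \<in> S" "l < d" for s l
  proof -
    have "complex_of_real (vnorm2 (n l) (col (U l) (s l))) = 1"
      using winner[OF that(1) that(1) that(2)] unfolding w_def vinner_self by simp
    then show ?thesis by (metis of_real_1 of_real_eq_iff)
  qed
  define Dd where "Dd = (1 + dl) ^ d - 1"
  define Od where "Od = (mu + 2 * dl) ^ d - mu ^ d"
  have fin: "finite {cmod (vinner (n l) (col (U l) (i l)) (col (U l) (i' l))) | l i i'. l < d \<and> i \<in> S \<and> i' \<in> S \<and> i \<noteq> i'}"
  proof (rule finite_subset)
    show "{cmod (vinner (n l) (col (U l) (i l)) (col (U l) (i' l))) | l i i'. l < d \<and> i \<in> S \<and> i' \<in> S \<and> i \<noteq> i'}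
       \<subseteq> (\<lambda>(l, i, i'). cmod (vinner (n l) (col (U l) (i l)) (col (U l) (i' l)))) ` ({..<d} \<times> S \<times> S)"
    proof
      fix x assume "x \<in> {cmod (vinner (n l) (col (U l) (i l)) (col (U l) (i' l))) | l i i'. l < d \<and> i \<in> S \<and> i' \<in> S \<and> i \<noteq> i'}"
      then obtain l i i' where "x = cmod (vinner (n l) (col (U l) (i l)) (col (U l) (i' l)))" "l < d" "i \<in> S" "i' \<in> S"
        by blast
      then show "x \<in> (\<lambda>(l, i, i'). cmod (vinner (n l) (col (U l) (i l)) (col (U l) (i' l)))) ` ({..<d} \<times> S \<times> S)"
        by (intro image_eqI[where x = "(l, i, i')"]) auto
    qed
    show "finite ((\<lambda>(l, i, i'). cmod (vinner (n l) (col (U l) (i l)) (col (U l) (i' l)))) ` ({..<d} \<times> S \<times> S))"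
      using finS by auto
  qed
  have mu_nn: "0 \<le> mu" unfolding mu_def coherence_def
  proof -
    show "0 \<le> Max (insert 0 {cmod (vinner (n l) (col (U l) (i l)) (col (U l) (i' l))) | l i i'. l < d \<and> i \<in> S \<and> i' \<in> S \<and> i \<noteq> i'})"
      using fin by (intro Max_ge) auto
  qed
  have mu_ge: "cmod (vinner (n l) (w l s) (w l s')) \<le> mu" if "s \<in> S" "s' \<in> S" "s \<noteq> s'" "l < d" for l s s'
  proof -
    show ?thesis unfolding mu_def coherence_def w_def
      using fin that by (intro Max_ge) auto
  qed
  have JLl: "JL_embedding dl (m l) (n l) (A l) (JL_set (U l) l S)" if "l < d" for l
    using JL that unfolding dl_def by simp
  have Ediag: "cmod (H s s - G s s) \<le> Dd" if s: "s \<in> S" for s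
  proof -
  have "cmod (H s s - G s s) \<le> (1 + dl) ^ d - 1 ^ d"
    unfolding H_def G_def
  proof (rule prod_abs_diff)
    fix l assume l: "l < d"
    show "cmod (vinner (n l) (w l s) (w l s)) \<le> 1" using winner[OF s s l] by simp
    have "col (U l) (s l) \<in> JL_set (U l) l S" using s unfolding JL_set_def by blast
    then obtain ex where ex: "- dl < ex" "ex < dl" "vnorm2 (m l) (v l s) = (1 + ex) * 1"
      using JLl[OF l] colnorm[OF s l] unfolding JL_embedding_def v_def by force
    have "vinner (m l) (v l s) (v l s) - vinner (n l) (w l s) (w l s) = complex_of_real ex"
      using ex(3) winner[OF s s l] unfolding vinner_self by simp
    then show "cmod (vinner (m l) (v l s) (v l s) - vinner (n l) (w l s) (w l s)) \<le> dl"
      using ex by simp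
  qed (use dl_pos in auto)
  then show ?thesis unfolding Dd_def by simp
  qed
  have Eoff: "cmod (H s s' - G s s') \<le> Od" if s: "s \<in> S" "s' \<in> S" "s \<noteq> s'" for s s'
    unfolding H_def G_def Od_def
  proof (rule prod_abs_diff)
    fix l assume l: "l < d"
    show "cmod (vinner (n l) (w l s) (w l s')) \<le> mu" using mu_ge[OF s l] .
    have "cmod (vinner (m l) (mat_vec (n l) (A l) (col (U l) (s l))) (mat_vec (n l) (A l) (col (U l) (s' l)))
        - vinner (n l) (col (U l) (s l)) (col (U l) (s' l)))
        \<le> dl * (vnorm2 (n l) (col (U l) (s l)) + vnorm2 (n l) (col (U l) (s' l)))"
    proof (rule polar)
      fix z assume "z \<in> {(\<lambda>a. col (U l) (s l) a + col (U l) (s' l) a), (\<lambda>a. col (U l) (s l) a - col (U l) (s' l) a),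
          (\<lambda>a. col (U l) (s l) a + \<i> * col (U l) (s' l) a), (\<lambda>a. col (U l) (s l) a - \<i> * col (U l) (s' l) a)}"
      then have "z \<in> JL_set (U l) l S" using s unfolding JL_set_def by blast
      then show "\<exists>ex. - dl < ex \<and> ex < dl \<and> vnorm2 (m l) (mat_vec (n l) (A l) z) = (1 + ex) * vnorm2 (n l) z"
        using JLl[OF l] unfolding JL_embedding_def by blast
    qed
    then show "cmod (vinner (m l) (v l s) (v l s') - vinner (n l) (w l s) (w l s')) \<le> 2 * dl"
      unfolding v_def w_def using colnorm[OF s(1) l] colnorm[OF s(2) l] by simp
  qed (use dl_pos mu_nn in auto)
  have Dd_nn: "0 \<le> Dd" unfolding Dd_def using dl_pos by simp
  have Od_nn: "0 \<le> Od" unfolding Od_def using dl_pos mu_nn power_mono[of mu "mu + 2 * dl" d] by simp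
  have diffeq: "complex_of_real (tnorm2 (tidx d m) (multi_mode n A Y d) - tnorm2 (tidx d n) Y)
      = (\<Sum>s\<in>S. \<Sum>s'\<in>S. C s * cnj (C s') * (H s s' - G s s'))"
    unfolding of_real_diff gAY gY sum_subtractf[symmetric] by (simp add: algebra_simps)
  have "\<bar>tnorm2 (tidx d n) Y - tnorm2 (tidx d m) (multi_mode n A Y d)\<bar>
      = cmod (complex_of_real (tnorm2 (tidx d m) (multi_mode n A Y d) - tnorm2 (tidx d n) Y))"
    by (simp only: norm_of_real abs_minus_commute)
  also have "\<dots> \<le> (\<Sum>s\<in>S. \<Sum>s'\<in>S. cmod (C s) * cmod (C s') * cmod (H s s' - G s s'))"
    unfolding diffeq
    by (rule order_trans[OF norm_sum sum_mono], rule order_trans[OF norm_sum sum_mono]) (simp add: norm_mult)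
  also have "\<dots> \<le> (\<Sum>s\<in>S. (cmod (C s))\<^sup>2 * Dd + Od * (\<Sum>s'\<in>S - {s}. cmod (C s) * cmod (C s')))"
  proof (intro sum_mono)
    fix s assume s: "s \<in> S"
    have "(\<Sum>s'\<in>S. cmod (C s) * cmod (C s') * cmod (H s s' - G s s'))
        = cmod (C s) * cmod (C s) * cmod (H s s - G s s) + (\<Sum>s'\<in>S - {s}. cmod (C s) * cmod (C s') * cmod (H s s' - G s s'))"
      using s finS by (simp add: sum.remove)
    also have "\<dots> \<le> (cmod (C s))\<^sup>2 * Dd + (\<Sum>s'\<in>S - {s}. Od * (cmod (C s) * cmod (C s')))"
    proof (intro add_mono sum_mono)
      show "cmod (C s) * cmod (C s) * cmod (H s s - G s s) \<le> (cmod (C s))\<^sup>2 * Dd"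
        using mult_left_mono[OF Ediag[OF s], of "cmod (C s) * cmod (C s)"] by (simp add: power2_eq_square)
      fix s' assume s': "s' \<in> S - {s}"
      have Es: "cmod (H s s' - G s s') \<le> Od" using Eoff s s' by auto
      show "cmod (C s) * cmod (C s') * cmod (H s s' - G s s') \<le> Od * (cmod (C s) * cmod (C s'))"
        using mult_right_mono[OF Es, of "cmod (C s) * cmod (C s')"] by (simp only: mult_ac) simp
    qed
    finally show "(\<Sum>s'\<in>S. cmod (C s) * cmod (C s') * cmod (H s s' - G s s'))
       \<le> (cmod (C s))\<^sup>2 * Dd + Od * (\<Sum>s'\<in>S - {s}. cmod (C s) * cmod (C s'))"
      by (simp add: sum_distrib_left)
  qed
  also have "\<dots> = Dd * Nc + Od * (\<Sum>s\<in>S. \<Sum>s'\<in>S - {s}. cmod (C s) * cmod (C s'))"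
    unfolding Nc_def by (simp add: sum.distrib sum_distrib_left mult_ac)
  also have "\<dots> \<le> Dd * Nc + Od * (real (r - 1) * Nc)"
    using cs_pairs[OF finS, of "\<lambda>s. cmod (C s)"] Od_nn Dd_nn unfolding Nc_def r
    by (intro add_mono mult_left_mono) auto
  finally have main: "\<bar>tnorm2 (tidx d n) Y - tnorm2 (tidx d m) (multi_mode n A Y d)\<bar> \<le> (Dd + real (r - 1) * Od) * Nc"
    by (simp add: algebra_simps)
  have Dd_le: "Dd \<le> eps / 2" unfolding Dd_def dl_def using numD[OF d eps] .
  have e1: "1 \<le> exp (1::real)" by simp
  define sq where "sq = sqrt (real r * (real r - 1))"
  have q_sq: "real (r - 1) \<le> sq"
  proof (cases r)
    case 0 then show ?thesis unfolding sq_def by simp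
  next
    case (Suc k)
    have "(real (r - 1))\<^sup>2 \<le> real r * (real r - 1)" using Suc by (simp add: power2_eq_square algebra_simps)
    then show ?thesis unfolding sq_def by (rule real_le_rsqrt)
  qed
  have q_nn: "0 \<le> real (r - 1)" by simp
  have sq_nn: "0 \<le> sq" using q_sq q_nn by linarith
  have coef: "Dd + real (r - 1) * Od \<le> (if mu = 0
            then (eps + exp 1 * sq * eps ^ d) * exp 1
            else eps * (exp 1 + (exp 1)\<^sup>2 * sq * max (eps ^ (d - 1)) (mu ^ (d - 1))))"
  proof (cases "mu = 0")
    case True
    have "Od = (2 * dl) ^ d" unfolding Od_def True using d by simp
    also have "\<dots> \<le> eps ^ d" unfolding dl_def using eps d
      by (intro power_mono) (auto simp: field_simps)
    finally have "real (r - 1) * Od \<le> sq * eps ^ d" using q_sq q_nn Od_nn eps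
      by (intro mult_mono) auto
    also have "\<dots> \<le> exp 1 * (sq * eps ^ d) * exp 1"
      using sq_nn eps e1 by (intro le_e2) auto
    finally have "real (r - 1) * Od \<le> exp 1 * sq * eps ^ d * exp 1" by (simp add: mult_ac)
    moreover have "Dd \<le> eps * exp 1" using Dd_le le_half_e[of eps "exp 1"] e1 eps by linarith
    ultimately show ?thesis using True by (simp add: algebra_simps)
  next
    case False
    then have mpos: "0 < mu" using mu_nn by simp
    have Ob: "Od \<le> eps / 2 * exp 1 * (max eps mu) ^ (d - 1)"
      unfolding Od_def dl_def using numO[OF d eps(1) mu_nn] .
    have mx: "max (eps ^ (d - 1)) (mu ^ (d - 1)) = (max eps mu) ^ (d - 1)"
      using eps mu_nn by (cases "eps \<le> mu") (auto simp: max_def power_mono intro: antisym)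
    have Mnn: "0 \<le> (max eps mu) ^ (d - 1)" using eps by simp
    have "real (r - 1) * Od \<le> sq * (eps / 2 * exp 1 * (max eps mu) ^ (d - 1))"
      using q_sq q_nn Ob Od_nn by (intro mult_mono) auto
    also have "\<dots> \<le> eps * ((exp 1)\<^sup>2 * sq * (max eps mu) ^ (d - 1))"
    proof -
      have "0 \<le> sq * eps * exp 1 * (max eps mu) ^ (d - 1)" using sq_nn eps Mnn by simp
      then have "sq * eps * exp 1 * (max eps mu) ^ (d - 1) / 2 \<le> sq * eps * exp 1 * (max eps mu) ^ (d - 1) * exp 1"
        using e1 by (rule le_half_e)
      then show ?thesis by (simp add: power2_eq_square mult_ac)
    qed
    finally have "real (r - 1) * Od \<le> eps * ((exp 1)\<^sup>2 * sq * (max eps mu) ^ (d - 1))" .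
    moreover have "Dd \<le> eps * exp 1" using Dd_le le_half_e[of eps "exp 1"] e1 eps by linarith
    ultimately show ?thesis using False mx by (simp add: algebra_simps)
  qed
  have "(Dd + real (r - 1) * Od) * Nc \<le> (if mu = 0
            then (eps + exp 1 * sq * eps ^ d) * exp 1
            else eps * (exp 1 + (exp 1)\<^sup>2 * sq * max (eps ^ (d - 1)) (mu ^ (d - 1)))) * Nc"
    using coef Nc_nn by (rule mult_right_mono)
  with main normY show ?thesis unfolding mu_def sq_def by simp
qed

end
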